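(* Let $V$ be a real sequence and suppose that for some $a>0$ the equation $(-\Delta+V)\psi=0$ has a solution $\psi^-$ with $n^a\psi^-_n\to1$ as $n\to\infty$. Then for any solution $\psi$ that is linearly independent of $\psi^-$, $|\psi^-_n\psi_n|\sim Cn$ for some constant $C>0$.
   Context: $(\Delta f)_n=f_{n+1}+f_{n-1}-2f_n$; $(-\Delta+V)\psi=0$ means $-\psi_{n+1}-\psi_{n-1}+(2+V_n)\psi_n=0$ for $n\ge1$. *)

theory Defs
  imports "HOL-Analysis.Analysis" "HOL-Library.Landau_Symbols"
begin

text \<open>Discrete Laplacian: (Delta f)_n = f_(n+1) + f_(n-1) - 2 f_n.  A sequence psi on
  the nonnegative integers solves (-Delta + V) psi = 0 if the equation holds for all n >= 1.\<close>

definition solves_schr :: "(nat \<Rightarrow> real) \<Rightarrow> (nat \<Rightarrow> real) \<Rightarrow> bool" where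
  "solves_schr V \<psi> \<longleftrightarrow>
     (\<forall>n\<ge>1. - \<psi> (n + 1) - \<psi> (n - 1) + (2 + V n) * \<psi> n = 0)"

definition lin_indep2 :: "(nat \<Rightarrow> real) \<Rightarrow> (nat \<Rightarrow> real) \<Rightarrow> bool" where
  "lin_indep2 f g \<longleftrightarrow>
     (\<forall>\<alpha> \<beta>. (\<forall>n. \<alpha> * f n + \<beta> * g n = 0) \<longrightarrow> \<alpha> = 0 \<and> \<beta> = 0)"

end

theory Submission
  imports Defs "HOL-Real_Asymp.Real_Asymp"
begin

lemma stolz_telescope:
  fixes a b :: "nat \<Rightarrow> real"
  assumes step: "\<And>n. n \<ge> N \<Longrightarrow> \<bar>(a (Suc n) - a n) - L * (b (Suc n) - b n)\<bar> \<le> e * (b (Suc n) - b n)"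
  shows "n \<ge> N \<Longrightarrow> \<bar>a n - a N - L * (b n - b N)\<bar> \<le> e * (b n - b N)"
proof (induction n rule: dec_induct)
  case base
  then show ?case by simp
next
  case (step n)
  have eq: "a (Suc n) - a N - L * (b (Suc n) - b N)
     = (a n - a N - L * (b n - b N)) + ((a (Suc n) - a n) - L * (b (Suc n) - b n))"
    by (simp add: algebra_simps)
  have "\<bar>a (Suc n) - a N - L * (b (Suc n) - b N)\<bar>
     \<le> \<bar>a n - a N - L * (b n - b N)\<bar> + \<bar>(a (Suc n) - a n) - L * (b (Suc n) - b n)\<bar>"
    unfolding eq by (rule abs_triangle_ineq)
  also have "\<dots> \<le> e * (b n - b N) + e * (b (Suc n) - b n)"
    using step.IH assms[OF step.hyps(1)] by linarith
  finally show ?case by (simp add: algebra_simps)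
qed

lemma stolz:
  fixes a b :: "nat \<Rightarrow> real"
  assumes mono: "\<And>n. n \<ge> N0 \<Longrightarrow> b n < b (Suc n)"
    and inf: "filterlim b at_top sequentially"
    and lim: "(\<lambda>n. (a (Suc n) - a n) / (b (Suc n) - b n)) \<longlonglongrightarrow> L"
  shows "(\<lambda>n. a n / b n) \<longlonglongrightarrow> L"
proof (rule LIMSEQ_I)
  fix r :: real assume r: "r > 0"
  obtain N1 where N1: "\<And>n. n \<ge> N1 \<Longrightarrow> norm ((a (Suc n) - a n) / (b (Suc n) - b n) - L) < r/2"
    using LIMSEQ_D[OF lim, of "r/2"] r by auto
  define N where "N = max N0 N1"
  have st: "\<bar>(a (Suc n) - a n) - L * (b (Suc n) - b n)\<bar> \<le> (r/2) * (b (Suc n) - b n)" if "n \<ge> N" for n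
  proof -
    have pos: "b (Suc n) - b n > 0" using mono[of n] that by (simp add: N_def)
    have "\<bar>(a (Suc n) - a n) / (b (Suc n) - b n) - L\<bar> < r/2" using N1[of n] that by (simp add: N_def)
    hence "\<bar>((a (Suc n) - a n) - L * (b (Suc n) - b n)) / (b (Suc n) - b n)\<bar> < r/2"
      using pos by (simp add: diff_divide_distrib)
    hence "\<bar>(a (Suc n) - a n) - L * (b (Suc n) - b n)\<bar> / (b (Suc n) - b n) < r/2"
      using pos by simp
    thus ?thesis using pos by (simp add: divide_less_eq)
  qed
  define K where "K = \<bar>a N - L * b N\<bar> + \<bar>b N\<bar> * r + 1"
  have "eventually (\<lambda>n. b n > 2 * K / r + 1) sequentially"
    using inf by (simp add: filterlim_at_top_dense)
  then obtain N2 where N2: "\<And>n. n \<ge> N2 \<Longrightarrow> b n > 2 * K / r + 1"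
    by (auto simp: eventually_sequentially)
  show "\<exists>no. \<forall>n\<ge>no. norm (a n / b n - L) < r"
  proof (intro exI allI impI)
    fix n assume n: "n \<ge> max N N2"
    have Kpos: "K > 0" unfolding K_def by (smt (verit) abs_ge_zero mult_nonneg_nonneg r)
    have bK: "b n > 2 * K / r" using N2[of n] n by simp
    have "2 * K / r > 0" using Kpos r by simp
    hence bpos: "b n > 0" using bK by linarith
    have T: "\<bar>a n - a N - L * (b n - b N)\<bar> \<le> (r/2) * (b n - b N)"
      using stolz_telescope[of N a L b "r/2" n, OF st] n by simp
    have "a n - L * b n = (a N - L * b N) + (a n - a N - L * (b n - b N))" by (simp add: algebra_simps)
    hence "\<bar>a n - L * b n\<bar> \<le> \<bar>a N - L * b N\<bar> + (r/2) * (b n - b N)"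
      using T by linarith
    also have "\<dots> \<le> K + (r/2) * b n"
    proof -
      have h1: "(r/2) * (- b N) \<le> (r/2) * \<bar>b N\<bar>"
        by (rule mult_left_mono) (use r in auto)
      have h2: "(r/2) * \<bar>b N\<bar> = (\<bar>b N\<bar> * r) / 2" by simp
      have h3: "0 \<le> \<bar>b N\<bar> * r" using r by simp
      have h4: "(r/2) * (b n - b N) = (r/2) * b n + (r/2) * (- b N)" by (simp only: right_diff_distrib mult_minus_right)
      show ?thesis unfolding K_def h4 using h1 h2 h3 by linarith
    qed
    also have "\<dots> < r * b n"
    proof -
      have "K < (r/2) * b n" using bK r by (simp add: field_simps)
      thus ?thesis by linarith
    qed
    finally have "\<bar>a n - L * b n\<bar> < r * b n" .
    hence "\<bar>a n - L * b n\<bar> / b n < r" using bpos by (simp add: divide_less_eq)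
    moreover have "a n / b n - L = (a n - L * b n) / b n" using bpos by (simp add: field_simps)
    ultimately show "norm (a n / b n - L) < r" using bpos by (simp add: abs_divide)
  qed
qed

lemma schr_step:
  assumes "solves_schr V f"
  shows "f (Suc (Suc n)) = (2 + V (Suc n)) * f (Suc n) - f n"
  using assms unfolding solves_schr_def by (auto elim!: allE[of _ "Suc n"])

lemma wronsk_step:
  assumes "solves_schr V p" "solves_schr V q"
  shows "p (Suc n) * q (Suc (Suc n)) - p (Suc (Suc n)) * q (Suc n) = p n * q (Suc n) - p (Suc n) * q n"
proof -
  have e1: "p (Suc (Suc n)) = (2 + V (Suc n)) * p (Suc n) - p n" by (rule schr_step[OF assms(1)])
  have e2: "q (Suc (Suc n)) = (2 + V (Suc n)) * q (Suc n) - q n" by (rule schr_step[OF assms(2)])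
  show ?thesis unfolding e1 e2 by (simp add: algebra_simps)
qed

lemma schr_zero:
  assumes s: "solves_schr V f" and z: "f m = 0" "f (Suc m) = 0"
  shows "f n = 0"
proof -
  have fw: "f (m + k) = 0 \<and> f (Suc (m + k)) = 0" for k
  proof (induction k)
    case 0 then show ?case using z by simp
  next
    case (Suc k) then show ?case using schr_step[OF s, of "m + k"] by simp
  qed
  have bw: "k \<le> m \<Longrightarrow> f (m - k) = 0 \<and> f (Suc (m - k)) = 0" for k
  proof (induction k)
    case 0 then show ?case using z by simp
  next
    case (Suc k)
    then have h: "f (m - k) = 0" "f (Suc (m - k)) = 0" by auto
    obtain j where j: "m - k = Suc j" using Suc.prems by (metis Suc_diff_Suc Suc_le_lessD)
    have "m - Suc k = j" using j by simp
    moreover have "f j = 0" using schr_step[OF s, of j] h j by simp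
    ultimately show ?case using h j by simp
  qed
  show ?thesis
  proof (cases "n \<ge> m")
    case True
    then show ?thesis using fw[of "n - m"] by simp
  next
    case False
    then show ?thesis using bw[of "m - n"] by simp
  qed
qed

theorem corollary4:
  fixes V \<psi>m :: "nat \<Rightarrow> real" and a :: real
  assumes "a > 0"
    and "solves_schr V \<psi>m"
    and "(\<lambda>n. real n powr a * \<psi>m n) \<longlonglongrightarrow> 1"
  shows "\<forall>\<psi>. solves_schr V \<psi> \<and> lin_indep2 \<psi>m \<psi> \<longrightarrow>
           (\<exists>C>0. (\<lambda>n. \<bar>\<psi>m n * \<psi> n\<bar>) \<sim>[at_top] (\<lambda>n. C * real n))"
proof (intro allI impI)
  fix \<psi> assume H: "solves_schr V \<psi> \<and> lin_indep2 \<psi>m \<psi>"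
  define p where "p = \<psi>m"
  have sp: "solves_schr V p" using assms(2) p_def by simp
  have sq: "solves_schr V \<psi>" using H by simp
  have li: "lin_indep2 p \<psi>" using H p_def by simp
  have plim: "(\<lambda>n. real n powr a * p n) \<longlonglongrightarrow> 1" using assms(3) p_def by simp
  define W where "W n = p n * \<psi> (Suc n) - p (Suc n) * \<psi> n" for n
  have Wc: "W n = W 0" for n
  proof (induction n)
    case (Suc n)
    have "W (Suc n) = W n"
      unfolding W_def by (rule wronsk_step[OF sp sq])
    then show ?case using Suc by simp
  qed simp
  define w where "w = W 0"
  obtain N where N: "\<And>n. n \<ge> N \<Longrightarrow> real n powr a * p n > 1/2" "N \<ge> 1"
  proof -
    obtain N' where "\<And>n. n \<ge> N' \<Longrightarrow> norm (real n powr a * p n - 1) < 1/2"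
      using LIMSEQ_D[OF plim, of "1/2"] by auto
    hence "\<And>n. n \<ge> max N' 1 \<Longrightarrow> real n powr a * p n > 1/2"
    proof -
      fix n assume "n \<ge> max N' 1"
      hence "\<bar>real n powr a * p n - 1\<bar> < 1/2" using \<open>\<And>n. n \<ge> N' \<Longrightarrow> norm (real n powr a * p n - 1) < 1/2\<close> by simp
      thus "real n powr a * p n > 1/2" by linarith
    qed
    moreover have "max N' 1 \<ge> 1" by simp
    ultimately show ?thesis by (rule that)
  qed
  have ppos: "p n > 0" if "n \<ge> N" for n
  proof -
    have "real n powr a > 0" using that N(2) by simp
    moreover have "real n powr a * p n > 0" using N(1)[OF that] by linarith
    ultimately show ?thesis by (simp add: zero_less_mult_iff)
  qed
  have wnz: "w \<noteq> 0"
  proof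
    assume w0: "w = 0"
    define c where "c = \<psi> N / p N"
    define \<phi> where "\<phi> n = \<psi> n - c * p n" for n
    have pN: "p N > 0" "p (Suc N) > 0" using ppos by auto
    have s\<phi>: "solves_schr V \<phi>"
      unfolding solves_schr_def
    proof (intro allI impI)
      fix n :: nat assume "n \<ge> 1"
      hence e1: "- \<psi> (n + 1) - \<psi> (n - 1) + (2 + V n) * \<psi> n = 0"
        and e2: "- p (n + 1) - p (n - 1) + (2 + V n) * p n = 0"
        using sp sq unfolding solves_schr_def by auto
      have "- \<phi> (n + 1) - \<phi> (n - 1) + (2 + V n) * \<phi> n
          = (- \<psi> (n + 1) - \<psi> (n - 1) + (2 + V n) * \<psi> n) - c * (- p (n + 1) - p (n - 1) + (2 + V n) * p n)"
        unfolding \<phi>_def by (simp add: algebra_simps)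
      thus "- \<phi> (n + 1) - \<phi> (n - 1) + (2 + V n) * \<phi> n = 0" using e1 e2 by simp
    qed
    have z1: "\<phi> N = 0" using pN unfolding \<phi>_def c_def by simp
    have "W N = 0" using Wc[of N] w0 w_def by simp
    hence "p N * \<psi> (Suc N) = p (Suc N) * \<psi> N" unfolding W_def by simp
    hence "\<psi> (Suc N) = p (Suc N) * \<psi> N / p N" using pN by (simp add: field_simps)
    hence z2: "\<phi> (Suc N) = 0" unfolding \<phi>_def c_def by simp
    have "\<forall>n. (- c) * p n + 1 * \<psi> n = 0" using schr_zero[OF s\<phi> z1 z2] unfolding \<phi>_def by simp
    moreover have "\<forall>\<alpha> \<beta>. (\<forall>n. \<alpha> * p n + \<beta> * \<psi> n = 0) \<longrightarrow> \<alpha> = 0 \<and> \<beta> = 0"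
      using li unfolding lin_indep2_def .
    ultimately have "(1::real) = 0" by blast
    thus False by simp
  qed
  define q where "q = 2 * a + 1"
  have qpos: "q > 0" using assms(1) q_def by simp
  define r where "r n = \<psi> n / p n" for n
  define b where "b n = real n powr q / q" for n
  have incr: "r (Suc n) - r n = w / (p n * p (Suc n))" if "n \<ge> N" for n
  proof -
    have "p n > 0" "p (Suc n) > 0" using ppos that by auto
    thus ?thesis unfolding r_def w_def using Wc[of n] unfolding W_def by (simp add: field_simps)
  qed
  have bmono: "b n < b (Suc n)" if "n \<ge> 1" for n
    unfolding b_def using qpos that by (simp add: divide_strict_right_mono powr_less_mono2)
  have binf: "filterlim b at_top sequentially"
    unfolding b_def q_def using assms(1) by real_asymp
  have A: "((\<lambda>n::nat. q * real n powr a * real (Suc n) powr a / (real (Suc n) powr q - real n powr q)) \<longlongrightarrow> 1) at_top"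
    unfolding q_def using assms(1) by real_asymp
  have plim2: "(\<lambda>n. real (Suc n) powr a * p (Suc n)) \<longlonglongrightarrow> 1"
    using LIMSEQ_Suc[OF plim] by simp
  have L: "(\<lambda>n. w * (1 / (real n powr a * p n)) * (1 / (real (Suc n) powr a * p (Suc n)))
            * (q * real n powr a * real (Suc n) powr a / (real (Suc n) powr q - real n powr q))) \<longlonglongrightarrow> w * (1/1) * (1/1) * 1"
    by (intro tendsto_intros plim plim2 A) simp_all
  have L2: "(\<lambda>n. (r (Suc n) - r n) / (b (Suc n) - b n)) \<longlonglongrightarrow> w"
  proof -
    have "eventually (\<lambda>n. w * (1 / (real n powr a * p n)) * (1 / (real (Suc n) powr a * p (Suc n)))
            * (q * real n powr a * real (Suc n) powr a / (real (Suc n) powr q - real n powr q))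
          = (r (Suc n) - r n) / (b (Suc n) - b n)) sequentially"
      unfolding eventually_sequentially
    proof (intro exI allI impI)
      fix n assume n: "n \<ge> N"
      have n1: "n \<ge> 1" using n N(2) by simp
      have pp: "p n > 0" "p (Suc n) > 0" using ppos n by auto
      have d: "real (Suc n) powr q - real n powr q > 0" using qpos n1 by (simp add: powr_less_mono2)
      have e1: "real n powr a > 0" "real (Suc n) powr a > 0" using n1 by auto
      have bd: "b (Suc n) - b n = (real (Suc n) powr q - real n powr q) / q" unfolding b_def by (simp add: diff_divide_distrib)
      show "w * (1 / (real n powr a * p n)) * (1 / (real (Suc n) powr a * p (Suc n)))
            * (q * real n powr a * real (Suc n) powr a / (real (Suc n) powr q - real n powr q))
          = (r (Suc n) - r n) / (b (Suc n) - b n)"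
        unfolding incr[OF n] bd using pp d e1 qpos by (simp add: field_simps)
    qed
    with L show ?thesis using Lim_transform_eventually by fastforce
  qed
  have rb: "(\<lambda>n. r n / b n) \<longlonglongrightarrow> w"
    using stolz[of 1 b r w] bmono binf L2 by blast
  define C where "C = \<bar>w\<bar> / q"
  have Cpos: "C > 0" using wnz qpos C_def by simp
  have M: "(\<lambda>n. (real n powr a * p n) * (real n powr a * p n) * (r n / b n) / q / C) \<longlonglongrightarrow> 1 * 1 * w / q / C"
    using qpos Cpos by (intro tendsto_intros plim rb) simp_all
  have one: "\<bar>1 * 1 * w / q / C\<bar> = 1" using wnz qpos Cpos unfolding C_def
    by (simp add: field_simps)
  have ev: "eventually (\<lambda>n. \<bar>(real n powr a * p n) * (real n powr a * p n) * (r n / b n) / q / C\<bar>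
             = \<bar>p n * \<psi> n\<bar> / (C * real n)) sequentially"
    unfolding eventually_sequentially
  proof (intro exI allI impI)
    fix n assume n: "n \<ge> N"
    have n1: "real n > 0" using n N(2) by simp
    have pp: "p n > 0" using ppos n by auto
    have pw: "real n powr a * real n powr a * real n = real n powr q"
    proof -
      have "real n powr q = real n powr (a + a + 1)" by (simp add: q_def algebra_simps)
      also have "\<dots> = real n powr a * real n powr a * real n powr 1" by (simp only: powr_add)
      also have "\<dots> = real n powr a * real n powr a * real n" using n1 by simp
      finally show ?thesis by simp
    qed
    have "(real n powr a * p n) * (real n powr a * p n) * (r n / b n) / q / C
          = (real n powr a * real n powr a * real n) * (p n * \<psi> n) / (real n powr q * C * real n)"
      unfolding r_def b_def using pp qpos n1 Cpos by (simp add: field_simps)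
    also have "\<dots> = p n * \<psi> n / (C * real n)"
      unfolding pw using n1 Cpos by (simp add: field_simps)
    finally show "\<bar>(real n powr a * p n) * (real n powr a * p n) * (r n / b n) / q / C\<bar>
             = \<bar>p n * \<psi> n\<bar> / (C * real n)" using n1 Cpos by (simp add: abs_divide abs_mult)
  qed
  have "(\<lambda>n. \<bar>p n * \<psi> n\<bar> / (C * real n)) \<longlonglongrightarrow> 1"
    using Lim_transform_eventually[OF tendsto_rabs[OF M] ev] one by (simp only:)
  hence "(\<lambda>n. \<bar>\<psi>m n * \<psi> n\<bar>) \<sim>[at_top] (\<lambda>n. C * real n)"
    unfolding p_def by (rule asymp_equivI')
  with Cpos show "\<exists>C>0. (\<lambda>n. \<bar>\<psi>m n * \<psi> n\<bar>) \<sim>[at_top] (\<lambda>n. C * real n)"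
    by (intro exI[of _ C] conjI)
qed

end
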